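(* It holds that $$ \sup_{\mathbbm{u} \in U\setminus U^\delta} \frac{ \|\mathbbm{u}-\mathbbm{u}^\delta\|_U }{ \inf_{\tilde{\mathbbm{u}}^\delta \in U^\delta} \|\mathbbm{u}-\tilde{\mathbbm{u}}^\delta\|_U }= \frac{1}{\gamma^\delta_\kappa}. $$
   Context: Let $\Omega\subset\mathbb R^d$ be a bounded Lipschitz domain with $\partial\Omega=\Gamma_D\,\dot\cup\,\Gamma_N\,\dot\cup\,\Gamma_R$, $|\Gamma_R|>0$, and $\kappa>0$. Let $U:=L_2(\Omega)\times L_2(\Omega)^d$ (complex Hilbert space) and $V_{\mp}:=\{(\eta,\vec{v})\in H^1_{0,\Gamma_D}(\Omega)\times H(\mathrm{div};\Omega)\colon \int_{\partial\Omega}\vec{v}\cdot\vec{n}\,\overline{\psi}\,ds\mp i\int_{\Gamma_R}\eta\overline{\psi}\,ds=0\ \ (\psi\in H^1_{0,\Gamma_D}(\Omega))\}$. Let $B_\kappa'(\eta,\vec{v}):=(-\tfrac1\kappa\mathrm{div}\,\vec{v}-\eta,\ \tfrac1\kappa\nabla\eta-\vec{v})$, which is a boundedly invertible map $V_\mp\to U$, and let $B_\kappa\colon U\to V_\mp'$ be given by $(B_\kappa\mathbbm{w})(\mathbbm{v}):=\langle\mathbbm{w},B_\kappa'\mathbbm{v}\rangle_U$ (ultra-weak first order formulation of the Helmholtz equation, a boundedly invertible map). Equip $V_\mp$ with the optimal test norm $\|\mathbbm{v}\|_{V_{\mp},\kappa}:=\|B_\kappa'\mathbbm{v}\|_U$.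 For $q\in V_\mp'$ let $\mathbbm{u}\in U$ solve $B_\kappa\mathbbm{u}=q$. Let $\{0\}\subsetneq U^\delta\subset U$ and $V_\mp^\delta\subset V_\mp$ be closed subspaces with $\gamma^\delta_\kappa:=\inf_{0\neq\tilde{\mathbbm{u}}^\delta\in U^\delta}\sup_{0\neq\tilde{\mathbbm{v}}^\delta\in V_\mp^\delta}\frac{|(B_\kappa\tilde{\mathbbm{u}}^\delta)(\tilde{\mathbbm{v}}^\delta)|}{\|\tilde{\mathbbm{u}}^\delta\|_U\|\tilde{\mathbbm{v}}^\delta\|_{V_\mp,\kappa}}>0.$ Let $\mathbbm{u}^\delta$ be the second component of the unique $(\mathbbm{v}^\delta,\mathbbm{u}^\delta)\in V_\mp^\delta\times U^\delta$ solving $\langle B_\kappa'\mathbbm{v}^\delta,B_\kappa'\tilde{\mathbbm{v}}^\delta\rangle_U+\langle\mathbbm{u}^\delta,B_\kappa'\tilde{\mathbbm{v}}^\delta\rangle_U=q(\tilde{\mathbbm{v}}^\delta)$ for all $\tilde{\mathbbm{v}}^\delta\in V_\mp^\delta$, and $\langle B_\kappa'\mathbbm{v}^\delta,\tilde{\mathbbm{u}}^\delta\rangle_U=0$ for all $\tilde{\mathbbm{u}}^\delta\in U^\delta$ (the practical ultra-weak FOSLS / minimal residual solution). *)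

theory Defs
  imports "HOL-Analysis.Analysis"
begin

text \<open>Complex Hilbert spaces are modelled as real Hilbert spaces equipped with a
  complex structure J (multiplication by the imaginary unit), since the
  distribution has no type class of complex inner product spaces.\<close>

definition cplx_structure :: "('a::real_inner \<Rightarrow> 'a) \<Rightarrow> bool" where
  "cplx_structure J \<longleftrightarrow> linear J \<and> (\<forall>x. J (J x) = - x) \<and> (\<forall>x y. inner (J x) (J y) = inner x y)"

text \<open>The complex inner product induced by the real one and J:
  linear in the first, conjugate-linear in the second argument, with
  cinner J x x = (norm x)^2.\<close>
definition cinner :: "('a::real_inner \<Rightarrow> 'a) \<Rightarrow> 'a \<Rightarrow> 'a \<Rightarrow> complex" where
  "cinner J x y = Complex (inner x y) (inner x (J y))"

definition csubspace :: "('a::real_vector \<Rightarrow> 'a) \<Rightarrow> 'a set \<Rightarrow> bool" where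
  "csubspace J S \<longleftrightarrow> subspace S \<and> J ` S \<subseteq> S"

text \<open>Discrete inf-sup constant gamma^delta_kappa, with the test space normed by the
  optimal test norm norm (B' v); (B w)(v) = <w, B' v>_U.  A supremum over an empty
  set of nonnegative numbers is taken to be 0.\<close>
definition infsup_const ::
  "('u::real_inner \<Rightarrow> 'u) \<Rightarrow> ('v::real_vector \<Rightarrow> 'u) \<Rightarrow> 'u set \<Rightarrow> 'v set \<Rightarrow> real" where
  "infsup_const J B' Ud Vd =
     (INF w \<in> Ud - {0}. Sup (insert 0
        ((\<lambda>v. cmod (cinner J w (B' v)) / (norm w * norm (B' v))) ` (Vd - {0}))))"

end

theory Submission
  imports Defs
begin

lemma infdist_approx:
  assumes "A \<noteq> {}" "e > 0"
  shows "\<exists>a\<in>A. dist x a < infdist x A + e"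
proof -
  have "(INF a\<in>A. dist x a) < infdist x A + e" using assms infdist_notempty[of A x] by simp
  then show ?thesis
    using cINF_less_iff[of A "\<lambda>a. dist x a"] assms(1) by (auto intro: bdd_belowI[of _ 0])
qed

lemma infdist_greatest:
  assumes "A \<noteq> {}" "\<And>a. a \<in> A \<Longrightarrow> c \<le> dist x a"
  shows "c \<le> infdist x A"
  using assms infdist_notempty[of A x] by (simp add: cINF_greatest)

lemma proj_exists:
  fixes x :: "'a::{real_inner,complete_space}"
  assumes S: "subspace S" "closed S"
  shows "\<exists>p\<in>S. \<forall>y\<in>S. inner (x - p) y = 0"
proof -
  define d where "d = infdist x S"
  have S0: "S \<noteq> {}" using subspace_0[OF S(1)] by auto
  have d0: "d \<ge> 0" unfolding d_def by (rule infdist_nonneg)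
  have "\<forall>n. \<exists>y\<in>S. dist x y < d + 1 / (real n + 1)"
    using infdist_approx[OF S0] unfolding d_def by simp
  then obtain Y where Y: "\<And>n. Y n \<in> S" "\<And>n. dist x (Y n) < d + 1 / (real n + 1)"
    by metis
  have dle: "\<And>y. y \<in> S \<Longrightarrow> d \<le> norm (x - y)"
    unfolding d_def using infdist_le by (metis dist_norm)
  have par: "norm (Y n - Y m)^2 \<le> 2 * (d + 1/(real n+1))^2 + 2 * (d + 1/(real m+1))^2 - 4 * d^2" for n m
  proof -
    have mid: "(1/2) *\<^sub>R (Y n + Y m) \<in> S"
      using Y(1) S(1) by (simp add: subspace_add subspace_scale)
    have "d \<le> norm (x - (1/2) *\<^sub>R (Y n + Y m))" using dle[OF mid] .
    hence h1: "d^2 \<le> norm (x - (1/2) *\<^sub>R (Y n + Y m))^2" using d0 by (simp add: power_mono)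
    have eq: "norm (Y n - Y m)^2 = 2 * norm (x - Y n)^2 + 2 * norm (x - Y m)^2 - 4 * norm (x - (1/2) *\<^sub>R (Y n + Y m))^2"
      unfolding power2_norm_eq_inner
      by (simp add: inner_diff_left inner_diff_right inner_add_left inner_add_right inner_commute algebra_simps)
    have a: "norm (x - Y n)^2 \<le> (d + 1/(real n+1))^2"
      using Y(2)[of n] by (simp add: dist_norm power_mono)
    have b: "norm (x - Y m)^2 \<le> (d + 1/(real m+1))^2"
      using Y(2)[of m] by (simp add: dist_norm power_mono)
    show ?thesis using eq a b h1 by linarith
  qed
  have cauchy: "Cauchy Y"
  proof (rule metric_CauchyI)
    fix e :: real assume e: "e > 0"
    define \<delta> where "\<delta> = min 1 (e^2 / (4 * (2*d+1)))"
    have \<delta>: "\<delta> > 0" using e d0 by (simp add: \<delta>_def)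
    obtain N :: nat where N: "1 / (real N + 1) < \<delta>"
      using \<delta> by (metis nat_approx_posE of_nat_Suc add.commute)
    show "\<exists>M. \<forall>m\<ge>M. \<forall>n\<ge>M. dist (Y m) (Y n) < e"
    proof (intro exI allI impI)
      fix m n assume mn: "m \<ge> N" "n \<ge> N"
      have em: "1/(real m+1) \<le> 1/(real N+1)" "1/(real n+1) \<le> 1/(real N+1)"
        using mn by (auto simp: frac_le)
      define t where "t = 1/(real N+1)"
      have t: "0 < t" "t < \<delta>" using N by (auto simp: t_def)
      have "(d + 1/(real m+1))^2 \<le> (d+t)^2" "(d + 1/(real n+1))^2 \<le> (d+t)^2"
        using em d0 unfolding t_def by (auto intro!: power_mono)
      hence "norm (Y m - Y n)^2 \<le> 4 * (d+t)^2 - 4 * d^2" using par[of m n] by linarith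
      also have "4 * (d+t)^2 - 4 * d^2 = 4 * t * (2*d + t)" by (simp add: power2_eq_square algebra_simps)
      also have "\<dots> \<le> 4 * t * (2*d+1)" using t \<delta>_def d0 by auto
      also have "\<dots> < 4 * (e^2 / (4 * (2*d+1))) * (2*d+1)"
        using t \<delta>_def d0 by (intro mult_strict_right_mono) auto
      also have "\<dots> = e^2" using d0 by (simp add: field_simps)
      finally have "norm (Y m - Y n)^2 < e^2" .
      thus "dist (Y m) (Y n) < e" using e by (simp add: dist_norm power_less_imp_less_base)
    qed
  qed
  then obtain p where p: "Y \<longlonglongrightarrow> p" using complete_UNIV convergent_eq_Cauchy by blast
  have pS: "p \<in> S" using closed_sequentially[OF S(2)] Y(1) p by blast
  have "(\<lambda>n. dist x (Y n)) \<longlonglongrightarrow> dist x p" by (intro tendsto_intros p)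
  moreover have "(\<lambda>n. d + 1 / (real n + 1)) \<longlonglongrightarrow> d + 0"
    using LIMSEQ_inverse_real_of_nat by (intro tendsto_intros) (simp add: inverse_eq_divide add.commute)
  ultimately have "dist x p \<le> d + 0"
    by (rule LIMSEQ_le) (auto intro: less_imp_le Y(2))
  hence pmin: "\<And>y. y \<in> S \<Longrightarrow> norm (x - p) \<le> norm (x - y)" using dle by (simp add: dist_norm) (meson order_trans)
  show ?thesis
  proof (intro bexI[OF _ pS] ballI)
    fix s assume s: "s \<in> S"
    define c where "c = inner (x - p) s"
    show "inner (x - p) s = 0"
    proof (cases "s = 0")
      case True thus ?thesis by simp
    next
      case False
      define t where "t = c / (norm s)^2"
      have ns: "norm s ^2 > 0" using False by simp
      have "p + t *\<^sub>R s \<in> S" using S(1) pS s by (simp add: subspace_add subspace_scale)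
      hence "norm (x - p) \<le> norm (x - (p + t *\<^sub>R s))" by (rule pmin)
      hence "norm (x - p)^2 \<le> norm ((x - p) - t *\<^sub>R s)^2"
        by (simp add: power_mono algebra_simps)
      also have "\<dots> = norm (x - p)^2 - 2 * t * c + t^2 * (norm s)^2"
        unfolding power2_norm_eq_inner c_def
        by (simp add: inner_diff_left inner_diff_right inner_commute power2_eq_square algebra_simps)
      finally have "0 \<le> t^2 * (norm s)^2 - 2 * t * c" by simp
      also have "t^2 * (norm s)^2 - 2 * t * c = -((c^2) / ((norm s)^2))"
        using ns unfolding t_def by (simp add: power2_eq_square field_simps)
      finally have "c^2 / (norm s)^2 \<le> 0" by simp
      hence "c^2 \<le> 0" using ns by (simp add: divide_le_0_iff)
      thus ?thesis unfolding c_def by simp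
    qed
  qed
qed


lemma Re_cinner: "Re (cinner J x y) = inner x y" by (simp add: cinner_def)
lemma Im_cinner: "Im (cinner J x y) = inner x (J y)" by (simp add: cinner_def)

lemma cinner_cs:
  assumes J: "cplx_structure J"
  shows "cmod (cinner J x y) \<le> norm x * norm y"
proof -
  have lin: "linear J" and JJ: "\<And>x. J (J x) = - x" and Ji: "\<And>x y. inner (J x) (J y) = inner x y"
    using J unfolding cplx_structure_def by auto
  have yJy: "inner y (J y) = 0"
  proof -
    have "inner (J y) (J (J y)) = inner y (J y)" by (rule Ji)
    hence "- inner (J y) y = inner y (J y)" by (simp add: JJ)
    thus ?thesis by (simp add: inner_commute)
  qed
  have nJ: "inner (J y) (J y) = inner y y" by (rule Ji)
  define c1 where "c1 = inner x y"
  define c2 where "c2 = inner x (J y)"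
  define C where "C = c1^2 + c2^2"
  define v where "v = c1 *\<^sub>R y + c2 *\<^sub>R J y"
  have xv: "inner x v = C" unfolding v_def C_def c1_def c2_def
    by (simp add: inner_add_right power2_eq_square)
  have vv: "norm v ^ 2 = C * norm y ^2" unfolding power2_norm_eq_inner v_def C_def
    by (simp add: inner_add_left inner_add_right nJ yJy inner_commute[of "J y" y] power2_eq_square algebra_simps)
  have C0: "C \<ge> 0" unfolding C_def by simp
  have "C \<le> norm x * norm v" using xv norm_cauchy_schwarz[of x v] by simp
  hence "C^2 \<le> (norm x * norm v)^2" using C0 by (simp add: power_mono)
  hence "C * C \<le> norm x ^2 * (C * norm y^2)" by (simp add: power_mult_distrib vv power2_eq_square[of C])
  hence C2: "C \<le> (norm x * norm y)^2"
  proof (cases "C = 0")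
    case False
    with C0 have "C > 0" by simp
    with \<open>C * C \<le> _\<close> show ?thesis
      by (simp add: power_mult_distrib)
  qed simp
  have "cmod (cinner J x y) = sqrt C" unfolding cinner_def C_def c1_def c2_def by (simp add: complex_norm)
  also have "\<dots> \<le> sqrt ((norm x * norm y)^2)" using C2 by (rule real_sqrt_le_mono)
  also have "\<dots> = norm x * norm y" by simp
  finally show ?thesis .
qed


locale setting =
  fixes JU :: "'u::{real_inner, complete_space} \<Rightarrow> 'u"
    and JV :: "'v::banach \<Rightarrow> 'v"
    and B' :: "'v \<Rightarrow> 'u"
    and Ud :: "'u set" and Vd :: "'v set"
    and sol :: "'u \<Rightarrow> 'v \<times> 'u"
  assumes JU: "cplx_structure JU"
    and JV: "linear JV" "\<forall>v. JV (JV v) = - v"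
    and B'_bdd: "bounded_linear B'" and B'_bij: "bij B'" and B'_inv_bdd: "bounded_linear (inv B')"
    and B'_clin: "\<forall>v. B' (JV v) = JU (B' v)"
    and Ud: "csubspace JU Ud" "closed Ud" "Ud \<noteq> {0}" "Ud \<noteq> UNIV"
    and Vd: "csubspace JV Vd" "closed Vd"
    and gamma_pos: "infsup_const JU B' Ud Vd > 0"
    and sol: "\<forall>u. fst (sol u) \<in> Vd \<and> snd (sol u) \<in> Ud
               \<and> (\<forall>v\<in>Vd. cinner JU (B' (fst (sol u))) (B' v) + cinner JU (snd (sol u)) (B' v)
                          = cinner JU u (B' v))
               \<and> (\<forall>w\<in>Ud. cinner JU (B' (fst (sol u))) w = 0)"
begin

definition W where "W = B' ` Vd"

lemma B'lin: "linear B'" using B'_bdd bounded_linear.linear by blast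

lemma W_sub: "subspace W"
  unfolding W_def using Vd(1) B'lin csubspace_def linear_subspace_image by blast

lemma W_closed: "closed W"
proof -
  have "W = inv B' -` Vd"
    unfolding W_def using B'_bij
    by (auto simp: bij_def inv_f_f surj_f_inv_f image_iff) (metis surj_f_inv_f)
  moreover have "\<And>x. isCont (inv B') x"
    using B'_inv_bdd by (simp add: linear_continuous_at)
  ultimately show ?thesis using continuous_closed_vimage Vd(2) by metis
qed

lemma W_J: "y \<in> W \<Longrightarrow> JU y \<in> W"
  unfolding W_def using Vd(1) B'_clin unfolding csubspace_def by (auto simp flip: image_iff) (metis image_eqI image_subset_iff)

definition P where "P x = (SOME p. p \<in> W \<and> (\<forall>y\<in>W. inner (x - p) y = 0))"

lemma P_ex: "P x \<in> W \<and> (\<forall>y\<in>W. inner (x - P x) y = 0)"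
proof -
  have "\<exists>p. p \<in> W \<and> (\<forall>y\<in>W. inner (x - p) y = 0)" using proj_exists[OF W_sub W_closed] by blast
  thus ?thesis unfolding P_def by (rule someI_ex)
qed

lemma P_in: "P x \<in> W" and P_orth: "y \<in> W \<Longrightarrow> inner (x - P x) y = 0"
  using P_ex by auto

lemma P_char:
  assumes "p \<in> W" "\<And>y. y \<in> W \<Longrightarrow> inner (x - p) y = 0"
  shows "P x = p"
proof -
  have d: "P x - p \<in> W" using assms(1) P_in W_sub by (simp add: subspace_diff)
  have "inner (P x - p) (P x - p) = inner (x - p) (P x - p) - inner (x - P x) (P x - p)"
    by (simp add: inner_diff_left)
  also have "\<dots> = 0" using assms(2)[OF d] P_orth[OF d] by simp
  finally show ?thesis by simp
qed

lemma P_diff: "P (a - b) = P a - P b"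
proof (rule P_char)
  show "P a - P b \<in> W" using P_in W_sub by (simp add: subspace_diff)
  fix y assume y: "y \<in> W"
  have "a - b - (P a - P b) = (a - P a) - (b - P b)" by (simp add: algebra_simps)
  thus "inner (a - b - (P a - P b)) y = 0" using P_orth[OF y, of a] P_orth[OF y, of b]
    by (simp add: inner_diff_left)
qed

lemma P_scale: "P (c *\<^sub>R a) = c *\<^sub>R P a"
proof (rule P_char)
  show "c *\<^sub>R P a \<in> W" using P_in W_sub by (simp add: subspace_scale)
  fix y assume "y \<in> W"
  have "c *\<^sub>R a - c *\<^sub>R P a = c *\<^sub>R (a - P a)" by (simp add: algebra_simps)
  thus "inner (c *\<^sub>R a - c *\<^sub>R P a) y = 0" using P_orth[OF \<open>y \<in> W\<close>, of a] by simp
qed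

lemma P_W: "y \<in> W \<Longrightarrow> P y = y"
  by (rule P_char) auto

lemma P_inner: "inner (P a) (P a) = inner a (P a)"
  using P_orth[OF P_in, of a] by (simp add: inner_diff_left)

lemma pyth: "norm a ^2 = norm (a - P a)^2 + norm (P a)^2"
  unfolding power2_norm_eq_inner using P_inner[of a]
  by (simp add: inner_diff_left inner_diff_right inner_commute)

lemma P_le: "norm (P a) \<le> norm a"
  using pyth[of a] by (metis abs_norm_cancel le_add_same_cancel2 real_le_rsqrt zero_le_power2 real_sqrt_abs)


definition R where "R a v = cmod (cinner JU a (B' v)) / (norm a * norm (B' v))"
definition sp where "sp a = Sup (insert 0 (R a ` (Vd - {0})))"
definition gam where "gam = infsup_const JU B' Ud Vd"

lemma gam_eq: "gam = (INF a \<in> Ud - {0}. sp a)"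
  unfolding gam_def infsup_const_def sp_def R_def ..

lemma gpos: "gam > 0" using gamma_pos unfolding gam_def .

lemma R_le1: "R a v \<le> 1"
proof -
  have "cmod (cinner JU a (B' v)) \<le> norm a * norm (B' v)" by (rule cinner_cs[OF JU])
  thus ?thesis unfolding R_def
    by (cases "norm a * norm (B' v) = 0") (auto simp: divide_le_eq_1)
qed

lemma R_bdd: "bdd_above (insert 0 (R a ` X))"
  by (rule bdd_aboveI[of _ 1]) (auto simp: R_le1)

lemma sp_nonneg: "0 \<le> sp a"
  unfolding sp_def by (rule cSup_upper[OF _ R_bdd]) simp

lemma B'0: "B' v = 0 \<longleftrightarrow> v = 0"
  using B'_bij B'lin by (metis bij_def linear_0 injD)

lemma cinner_P: "y \<in> W \<Longrightarrow> cinner JU a y = cinner JU (P a) y"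
proof -
  assume y: "y \<in> W"
  have "inner (a - P a) y = 0" "inner (a - P a) (JU y) = 0" using P_orth y W_J by auto
  thus ?thesis unfolding cinner_def by (simp add: inner_diff_left)
qed

lemma sp_le: "a \<noteq> 0 \<Longrightarrow> sp a \<le> norm (P a) / norm a"
  unfolding sp_def
proof (rule cSup_least)
  assume a: "a \<noteq> 0"
  fix x assume "x \<in> insert 0 (R a ` (Vd - {0}))"
  then consider "x = 0" | v where "v \<in> Vd" "x = R a v" by auto
  then show "x \<le> norm (P a) / norm a"
  proof cases
    case 1 thus ?thesis by simp
  next
    case 2
    have yW: "B' v \<in> W" using 2 unfolding W_def by auto
    have "cmod (cinner JU a (B' v)) \<le> norm (P a) * norm (B' v)"
      using cinner_P[OF yW] cinner_cs[OF JU] by metis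
    hence "R a v \<le> (norm (P a) * norm (B' v)) / (norm a * norm (B' v))"
      unfolding R_def by (rule divide_right_mono) auto
    also have "\<dots> \<le> norm (P a) / norm a"
      by (cases "B' v = 0") auto
    finally show ?thesis using 2 by simp
  qed
qed simp

lemma sp_ge: "a \<noteq> 0 \<Longrightarrow> norm (P a) / norm a \<le> sp a"
proof (cases "P a = 0")
  case True thus ?thesis using sp_nonneg by simp
next
  case False
  assume a: "a \<noteq> 0"
  obtain v where v: "v \<in> Vd" "P a = B' v" using P_in[of a] unfolding W_def by auto
  have v0: "v \<noteq> 0" using v False B'0 by auto
  have "inner a (P a) = norm (P a)^2" using P_inner[of a] by (simp add: power2_norm_eq_inner)
  hence "norm (P a)^2 \<le> cmod (cinner JU a (P a))"
    using abs_Re_le_cmod[of "cinner JU a (P a)"] by (simp add: Re_cinner)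
  hence "norm (P a)^2 / (norm a * norm (P a)) \<le> R a v"
    unfolding R_def using v by (simp add: divide_right_mono)
  moreover have "norm (P a)^2 / (norm a * norm (P a)) = norm (P a) / norm a"
    using False by (simp add: power2_eq_square)
  moreover have "R a v \<le> sp a" unfolding sp_def
    by (rule cSup_upper[OF _ R_bdd]) (use v v0 in auto)
  ultimately show ?thesis by linarith
qed

lemma sp_eq: "a \<noteq> 0 \<Longrightarrow> sp a = norm (P a) / norm a"
  using sp_le sp_ge by (simp add: antisym)

lemma gam_le: "a \<in> Ud \<Longrightarrow> a \<noteq> 0 \<Longrightarrow> gam \<le> norm (P a) / norm a"
  unfolding gam_eq sp_eq[symmetric]
  by (rule cINF_lower) (auto intro: bdd_belowI[of _ 0] simp: sp_nonneg)

lemma gam_le': "a \<in> Ud \<Longrightarrow> gam * norm a \<le> norm (P a)"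
  using gam_le[of a] by (cases "a = 0") (auto simp: pos_le_divide_eq)

lemma gam_approx: "gam < g \<Longrightarrow> \<exists>a\<in>Ud - {0}. norm (P a) / norm a < g"
proof -
  assume "gam < g"
  hence "(INF a \<in> Ud - {0}. sp a) < g" by (simp add: gam_eq)
  moreover have "Ud - {0} \<noteq> {}" using Ud(3) Ud(1) unfolding csubspace_def
    using subspace_0 by blast
  moreover have "bdd_below (sp ` (Ud - {0}))" by (rule bdd_belowI[of _ 0]) (auto simp: sp_nonneg)
  ultimately obtain a where "a \<in> Ud - {0}" "sp a < g"
    using cINF_less_iff[of "Ud - {0}" sp g] by blast
  thus ?thesis using sp_eq by auto
qed

lemma gam_le1: "gam \<le> 1"
proof -
  obtain a where "a \<in> Ud" "a \<noteq> 0" using Ud(3) Ud(1) unfolding csubspace_def using subspace_0 by blast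
  moreover have "norm (P a) / norm a \<le> 1" using P_le[of a] by (simp add: divide_le_eq_1)
  ultimately show ?thesis using gam_le[of a] by linarith
qed

lemma key_inj: "d \<in> Ud \<Longrightarrow> P d = 0 \<Longrightarrow> d = 0"
  using gam_le gpos by fastforce

lemma sol_prop: "snd (sol u) \<in> Ud" "x \<in> Ud \<Longrightarrow> inner (P (u - snd (sol u))) x = 0"
proof -
  define q where "q = snd (sol u)"
  define w where "w = B' (fst (sol u))"
  have s: "fst (sol u) \<in> Vd" "q \<in> Ud"
    "\<And>v. v \<in> Vd \<Longrightarrow> cinner JU w (B' v) + cinner JU q (B' v) = cinner JU u (B' v)"
    "\<And>x. x \<in> Ud \<Longrightarrow> cinner JU w x = 0"
    using sol unfolding q_def w_def by auto
  show "snd (sol u) \<in> Ud" using s(2) q_def by simp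
  have wW: "w \<in> W" using s(1) unfolding W_def w_def by auto
  have "P (u - q) = w"
  proof (rule P_char[OF wW])
    fix y assume "y \<in> W"
    then obtain v where v: "v \<in> Vd" "y = B' v" unfolding W_def by auto
    have "Re (cinner JU w (B' v) + cinner JU q (B' v)) = Re (cinner JU u (B' v))" using s(3)[OF v(1)] by simp
    hence "inner w y + inner q y = inner u y" using v by (simp add: Re_cinner)
    thus "inner (u - q - w) y = 0" by (simp add: inner_diff_left)
  qed
  moreover assume x: "x \<in> Ud"
  have "Re (cinner JU w x) = 0" using s(4)[OF x] by simp
  hence "inner w x = 0" by (simp add: Re_cinner)
  ultimately show "inner (P (u - snd (sol u))) x = 0"
    by (simp add: q_def)
qed


lemma Q_unique:
  assumes q: "q \<in> Ud" "\<And>x. x \<in> Ud \<Longrightarrow> inner (P (u - q)) x = 0"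
  shows "snd (sol u) = q"
proof -
  define d where "d = snd (sol u) - q"
  have dU: "d \<in> Ud" using sol_prop(1) q(1) Ud(1) unfolding d_def csubspace_def by (simp add: subspace_diff)
  have "d = (u - q) - (u - snd (sol u))" unfolding d_def by simp
  hence Pd: "P d = P (u - q) - P (u - snd (sol u))" using P_diff by metis
  have "inner (P d) d = 0" unfolding Pd using q(2)[OF dU] sol_prop(2)[OF dU, of u]
    by (simp add: inner_diff_left)
  hence "inner (P d) (P d) = 0" using P_inner[of d] by (simp add: inner_commute)
  hence "P d = 0" by simp
  hence "d = 0" using key_inj dU by blast
  thus ?thesis unfolding d_def by simp
qed

lemma alg:
  fixes A B r g :: real
  assumes "A \<ge> 0" "B \<ge> 0" "r \<ge> 0" "0 \<le> g" "g \<le> 1" "r^2 \<le> (1 - g^2) * A^2"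
  shows "g^2 * B^2 \<le> A^2 + B^2 - 2 * r * B"
proof (cases "A = 0")
  case True
  hence "r = 0" using assms by simp
  moreover have "g^2 \<le> 1" using assms by (simp add: power_le_one)
  moreover have "g^2 * B^2 \<le> 1 * B^2" using \<open>g^2 \<le> 1\<close> by (rule mult_right_mono) simp
  ultimately show ?thesis using True by simp
next
  case False
  hence A: "A^2 > 0" using assms by simp
  have "0 \<le> (A^2 - r * B)^2" by simp
  also have "\<dots> = A^2 * A^2 + r^2 * B^2 - 2 * r * B * A^2" by (simp add: power2_eq_square algebra_simps)
  also have "\<dots> \<le> A^2 * A^2 + (1 - g^2) * A^2 * B^2 - 2 * r * B * A^2"
    using mult_right_mono[OF assms(6), of "B^2"] by simp
  also have "\<dots> = A^2 * (A^2 + B^2 - 2 * r * B - g^2 * B^2)" by (simp add: algebra_simps)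
  finally have "0 \<le> A^2 + B^2 - 2 * r * B - g^2 * B^2" using A by (simp add: zero_le_mult_iff)
  thus ?thesis by simp
qed

lemma upper:
  assumes t: "t \<in> Ud"
  shows "gam * norm (u - snd (sol u)) \<le> norm (u - t)"
proof -
  define q where "q = snd (sol u)"
  define a where "a = q - t"
  define b where "b = u - q"
  have aU: "a \<in> Ud" using sol_prop(1) t Ud(1) unfolding a_def q_def csubspace_def by (simp add: subspace_diff)
  have Pb: "inner (P b) a = 0" using sol_prop(2)[OF aU, of u] unfolding b_def q_def .
  have ab: "inner a b = inner (a - P a) (b - P b)"
  proof -
    have "inner (b - P b) (P a) = 0" by (rule P_orth[OF P_in])
    thus ?thesis using Pb by (simp add: inner_diff_left inner_diff_right inner_commute)
  qed
  have "\<bar>inner a b\<bar> \<le> norm (a - P a) * norm (b - P b)" unfolding ab by (rule Cauchy_Schwarz_ineq2)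
  also have "norm (b - P b) \<le> norm b"
    using pyth[of b] by (metis abs_norm_cancel le_add_same_cancel1 real_le_rsqrt zero_le_power2 real_sqrt_abs)
  hence "norm (a - P a) * norm (b - P b) \<le> norm (a - P a) * norm b" by (simp add: mult_left_mono)
  finally have iab: "- inner a b \<le> norm (a - P a) * norm b" by simp
  have g1: "gam * norm a \<le> norm (P a)" by (rule gam_le'[OF aU])
  hence "(gam * norm a)^2 \<le> norm (P a)^2" using gpos by (simp add: power_mono)
  hence "gam^2 * norm a^2 \<le> norm (P a)^2" by (simp add: power_mult_distrib)
  moreover have "(1 - gam^2) * norm a ^2 = norm a^2 - gam^2 * norm a^2" by (simp add: algebra_simps)
  ultimately have r: "norm (a - P a)^2 \<le> (1 - gam^2) * norm a ^2" using pyth[of a] by linarith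
  have "gam^2 * norm b^2 \<le> norm a^2 + norm b^2 - 2 * norm (a - P a) * norm b"
    by (rule alg[OF norm_ge_zero norm_ge_zero norm_ge_zero _ gam_le1 r]) (use gpos in simp)
  also have "\<dots> \<le> norm a^2 + norm b^2 + 2 * inner a b" using iab by linarith
  also have "\<dots> = norm (a + b)^2" unfolding power2_norm_eq_inner
    by (simp add: inner_add_left inner_add_right inner_commute)
  also have "a + b = u - t" unfolding a_def b_def by simp
  finally have "(gam * norm b)^2 \<le> norm (u - t)^2" by (simp add: power_mult_distrib)
  hence "gam * norm b \<le> norm (u - t)" by (rule power2_le_imp_le) simp
  thus ?thesis unfolding b_def q_def .
qed


lemma Ud_ne: "Ud \<noteq> {}" using Ud(1) subspace_0 unfolding csubspace_def by blast

lemma infdist_pos: "u \<notin> Ud \<Longrightarrow> infdist u Ud > 0"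
  using in_closed_iff_infdist_zero[OF Ud(2) Ud_ne, of u] infdist_nonneg[of u Ud] by linarith

lemma f_le: "u \<notin> Ud \<Longrightarrow> norm (u - snd (sol u)) / infdist u Ud \<le> 1 / gam"
proof -
  assume u: "u \<notin> Ud"
  have "gam * norm (u - snd (sol u)) \<le> infdist u Ud"
    by (rule infdist_greatest[OF Ud_ne]) (simp add: dist_norm upper)
  thus ?thesis using infdist_pos[OF u] gpos by (simp add: field_simps)
qed

lemma f_ge1: "u \<notin> Ud \<Longrightarrow> 1 \<le> norm (u - snd (sol u)) / infdist u Ud"
proof -
  assume u: "u \<notin> Ud"
  have "infdist u Ud \<le> dist u (snd (sol u))" by (rule infdist_le[OF sol_prop(1)])
  thus ?thesis using infdist_pos[OF u] by (simp add: dist_norm le_divide_eq_1)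
qed

lemma construction:
  assumes g: "gam < g" "g < 1"
  shows "\<exists>z. z \<notin> Ud \<and> 1 / g < norm (z - snd (sol z)) / infdist z Ud"
proof -
  obtain a0 where a0: "a0 \<in> Ud" "a0 \<noteq> 0" "norm (P a0) / norm a0 < g" using gam_approx[OF g(1)] by blast
  define a where "a = (1 / norm a0) *\<^sub>R a0"
  define p where "p = P a"
  define c where "c = norm p"
  have aU: "a \<in> Ud" using a0 Ud(1) unfolding a_def csubspace_def by (simp add: subspace_scale)
  have na: "norm a = 1" using a0 unfolding a_def by simp
  have pa: "p = (1 / norm a0) *\<^sub>R P a0" unfolding p_def a_def by (rule P_scale)
  have cg: "c < g" using a0 unfolding c_def pa by (simp add: divide_inverse mult.commute)
  have cgam: "gam \<le> c" using gam_le[OF aU] na a0 aU unfolding c_def p_def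
    by (metis div_by_1 norm_zero zero_neq_one)
  have c0: "c > 0" using cgam gpos by simp
  have c1: "c < 1" using cg g by simp
  have pp: "inner p p = c^2" unfolding c_def by (simp add: power2_norm_eq_inner)
  have ap: "inner a p = c^2" using P_inner[of a] pp unfolding p_def by simp
  define z where "z = p - c^2 *\<^sub>R a"
  define q where "q = (1 - c^2) *\<^sub>R a"
  have zq: "z - q = p - a" unfolding z_def q_def by (simp add: algebra_simps)
  have Ppa: "P (p - a) = 0" unfolding P_diff p_def using P_W[OF P_in] by simp
  have qU: "q \<in> Ud" using aU Ud(1) unfolding q_def csubspace_def by (simp add: subspace_scale)
  have Qz: "snd (sol z) = q" by (rule Q_unique[OF qU]) (simp add: zq Ppa)
  have pa_ne: "p - a \<noteq> 0"
  proof
    assume "p - a = 0"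
    hence "p = a" by simp
    hence "c = 1" using na unfolding c_def by simp
    thus False using c1 by simp
  qed
  have zU: "z \<notin> Ud"
  proof
    assume "z \<in> Ud"
    hence "z - q \<in> Ud" using qU Ud(1) unfolding csubspace_def by (simp add: subspace_diff)
    hence "p - a = 0" using key_inj Ppa zq by metis
    thus False using pa_ne by simp
  qed
  have npa: "norm (p - a)^2 = 1 - c^2" using pyth[of a] na unfolding p_def c_def
    by (simp add: norm_minus_commute)
  have "norm z ^2 = c^2 - 2 * c^2 * c^2 + c^2 * c^2"
    unfolding z_def power2_norm_eq_inner using na pp ap norm_eq_1[of a]
    by (simp add: inner_diff_left inner_diff_right inner_commute power2_norm_eq_inner algebra_simps)
  also have "\<dots> = c^2 * (1 - c^2)" by (simp add: algebra_simps power2_eq_square)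
  also have "\<dots> = (c * norm (p - a))^2" unfolding npa[symmetric] by (simp add: power_mult_distrib)
  finally have nz: "norm z = c * norm (p - a)" using c0 by (simp add: power2_eq_imp_eq)
  have "infdist z Ud \<le> dist z 0" by (rule infdist_le) (use Ud(1) subspace_0 csubspace_def in blast)
  hence idz: "infdist z Ud \<le> c * norm (p - a)" using nz by simp
  have ip: "infdist z Ud > 0" by (rule infdist_pos[OF zU])
  have "1 / g < 1 / c" using c0 cg by (simp add: frac_less2)
  also have "1 / c = norm (p - a) / (c * norm (p - a))" using pa_ne by simp
  also have "\<dots> \<le> norm (p - a) / infdist z Ud"
    by (rule frac_le) (use idz ip in auto)
  also have "norm (p - a) = norm (z - snd (sol z))" using Qz zq by simp
  finally show ?thesis using zU by blast
qed

lemma main: "(SUP u \<in> UNIV - Ud. norm (u - snd (sol u)) / infdist u Ud) = 1 / gam"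
proof (rule cSup_eq_non_empty)
  show "(\<lambda>u. norm (u - snd (sol u)) / infdist u Ud) ` (UNIV - Ud) \<noteq> {}" using Ud(4) by auto
  show "\<And>x. x \<in> (\<lambda>u. norm (u - snd (sol u)) / infdist u Ud) ` (UNIV - Ud) \<Longrightarrow> x \<le> 1 / gam"
    using f_le by auto
  fix y assume y: "\<And>x. x \<in> (\<lambda>u. norm (u - snd (sol u)) / infdist u Ud) ` (UNIV - Ud) \<Longrightarrow> x \<le> y"
  obtain u0 where "u0 \<notin> Ud" using Ud(4) by auto
  hence y1: "1 \<le> y" using y f_ge1 by (meson DiffI UNIV_I image_eqI order_trans)
  show "1 / gam \<le> y"
  proof (rule ccontr)
    assume "\<not> 1 / gam \<le> y"
    hence yl: "y < 1 / gam" by simp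
    have g1: "gam < 1" using yl y1 gpos gam_le1 by (cases "gam = 1") auto
    have gy: "gam < 1 / y" using yl y1 gpos by (simp add: field_simps)
    define g where "g = (gam + min 1 (1 / y)) / 2"
    have g: "gam < g" "g < 1" "g < 1 / y" using g1 gy unfolding g_def by auto
    obtain z where z: "z \<notin> Ud" "1 / g < norm (z - snd (sol z)) / infdist z Ud"
      using construction[OF g(1,2)] by blast
    have "norm (z - snd (sol z)) / infdist z Ud \<le> y" using y z(1) by auto
    moreover have "y < 1 / g" using g(3) y1 gpos g(1)
      by (simp add: field_simps)
    ultimately show False using z(2) by simp
  qed
qed

end
theorem theorem4p1:
  fixes JU :: "'u::{real_inner, complete_space} \<Rightarrow> 'u"
    and JV :: "'v::banach \<Rightarrow> 'v"
    and B' :: "'v \<Rightarrow> 'u"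
    and Ud :: "'u set" and Vd :: "'v set"
    and sol :: "'u \<Rightarrow> 'v \<times> 'u"
  assumes JU: "cplx_structure JU"
    and JV: "linear JV" "\<forall>v. JV (JV v) = - v"
    and B'_bdd: "bounded_linear B'" and B'_bij: "bij B'" and B'_inv_bdd: "bounded_linear (inv B')"
    and B'_clin: "\<forall>v. B' (JV v) = JU (B' v)"
    and Ud: "csubspace JU Ud" "closed Ud" "Ud \<noteq> {0}" "Ud \<noteq> UNIV"
    and Vd: "csubspace JV Vd" "closed Vd"
    and gamma_pos: "infsup_const JU B' Ud Vd > 0"
    and sol: "\<forall>u. fst (sol u) \<in> Vd \<and> snd (sol u) \<in> Ud
               \<and> (\<forall>v\<in>Vd. cinner JU (B' (fst (sol u))) (B' v) + cinner JU (snd (sol u)) (B' v)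
                          = cinner JU u (B' v))
               \<and> (\<forall>w\<in>Ud. cinner JU (B' (fst (sol u))) w = 0)"
  shows "(SUP u \<in> UNIV - Ud. norm (u - snd (sol u)) / infdist u Ud)
           = 1 / infsup_const JU B' Ud Vd"
proof -
  interpret S: setting JU JV B' Ud Vd sol
    by (rule setting.intro) (use assms in auto)
  show ?thesis using S.main unfolding S.gam_def .
qed

end
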